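(* Let $m \ge 2$, $n \ge 2$, and for $1 \le i \le m$ let $f_i(x) = x^T A_i x + c_i^T x + d_i$ be quadratics on $\mathbb{R}^n$ with $A_i$ symmetric, where $f_1(x) = \|x\|^2 - 1$. For $2 \le i \le m$ let $U_i > 0$ satisfy $|f_i(x)| \le U_i$ for all $x$ with $\|x\|^2 \le 2$. Let (S1) be the system $f_i(x) \le 0$, $1 \le i \le m$, and let (S2) be the system in the real variables $v_0, x_1,\ldots,x_n, s_1,\ldots,s_m, w_2,\ldots,w_m$: $$x^T A_i x + c_i^T v_0 x + d_i v_0^2 + s_i^2 = 0, \quad 1 \le i \le m,$$ $$\frac{s_i^2 + w_i^2}{U_i} - v_0^2 = 0, \quad 2 \le i \le m,$$ $$\|x\|^2 + s_1^2 + \sum_{i=2}^m \frac{s_i^2 + w_i^2}{U_i} + v_0^2 = m+1.$$ Let $M$ denote the largest absolute value of a coefficient in (S2), and let $0 \le \epsilon < 1/2$. (a) If (S1) is $\epsilon$-feasible, then (S2) is $m\epsilon$-feasible. (b) Conversely, if (S2) is $\epsilon$-feasible, then (S1) is $(2n+1)M\epsilon$-feasible.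
   Context: For a system of inequalities $f_i(x)\le 0$, a vector $\hat x$ is $\epsilon$-feasible if $f_i(\hat x) \le \epsilon$ for all $i$, and the system is $\epsilon$-feasible if such a vector exists. For equations $h = 0$, $\epsilon$-feasibility means $|h| \le \epsilon$. *)

theory Defs
  imports "HOL-Analysis.Analysis"
begin

definition quad :: "real^'n^'n \<Rightarrow> real^'n \<Rightarrow> real \<Rightarrow> real^'n \<Rightarrow> real" where
  "quad A c d x = x \<bullet> (A *v x) + c \<bullet> x + d"

definition S1_eps_feasible ::
  "nat \<Rightarrow> (nat \<Rightarrow> real^'n^'n) \<Rightarrow> (nat \<Rightarrow> real^'n) \<Rightarrow> (nat \<Rightarrow> real) \<Rightarrow> real \<Rightarrow> bool" where
  "S1_eps_feasible m A c d eps \<longleftrightarrow>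
     (\<exists>x. \<forall>i\<in>{1..m}. quad (A i) (c i) (d i) x \<le> eps)"

definition S2_eqA :: "real^'n^'n \<Rightarrow> real^'n \<Rightarrow> real \<Rightarrow> real \<Rightarrow> real^'n \<Rightarrow> real \<Rightarrow> real" where
  "S2_eqA Ai ci di v0 x si = x \<bullet> (Ai *v x) + v0 * (ci \<bullet> x) + di * v0\<^sup>2 + si\<^sup>2"

definition S2_eqB :: "real \<Rightarrow> real \<Rightarrow> real \<Rightarrow> real \<Rightarrow> real" where
  "S2_eqB Ui v0 si wi = (si\<^sup>2 + wi\<^sup>2) / Ui - v0\<^sup>2"

definition S2_eqC :: "nat \<Rightarrow> (nat \<Rightarrow> real) \<Rightarrow> real \<Rightarrow> real^'n \<Rightarrow> (nat \<Rightarrow> real) \<Rightarrow> (nat \<Rightarrow> real) \<Rightarrow> real" where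
  "S2_eqC m U v0 x s w =
     (norm x)\<^sup>2 + (s 1)\<^sup>2 + (\<Sum>i=2..m. ((s i)\<^sup>2 + (w i)\<^sup>2) / U i) + v0\<^sup>2 - (real m + 1)"

definition S2_eps_feasible ::
  "nat \<Rightarrow> (nat \<Rightarrow> real^'n^'n) \<Rightarrow> (nat \<Rightarrow> real^'n) \<Rightarrow> (nat \<Rightarrow> real) \<Rightarrow> (nat \<Rightarrow> real) \<Rightarrow> real \<Rightarrow> bool" where
  "S2_eps_feasible m A c d U eps \<longleftrightarrow>
     (\<exists>(v0::real) (x::real^'n) (s::nat \<Rightarrow> real) (w::nat \<Rightarrow> real).
        (\<forall>i\<in>{1..m}. \<bar>S2_eqA (A i) (c i) (d i) v0 x (s i)\<bar> \<le> eps) \<and>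
        (\<forall>i\<in>{2..m}. \<bar>S2_eqB (U i) v0 (s i) (w i)\<bar> \<le> eps) \<and>
        \<bar>S2_eqC m U v0 x s w\<bar> \<le> eps)"

text \<open>Largest absolute value of a coefficient of (S2), coefficients being those of the
  monomials of the expanded polynomial equations: A_i jj for x_j^2, A_i jk + A_i kj for
  x_j x_k (j \<noteq> k), (c_i)_j for v0 x_j, d_i for v0^2, 1 / -1 for s_i^2, v0^2, x_j^2,
  1/U_i for s_i^2, w_i^2, and the constant m+1 of the last equation.\<close>
definition S2_max_coeff ::
  "nat \<Rightarrow> (nat \<Rightarrow> real^'n^'n) \<Rightarrow> (nat \<Rightarrow> real^'n) \<Rightarrow> (nat \<Rightarrow> real) \<Rightarrow> (nat \<Rightarrow> real) \<Rightarrow> real" where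
  "S2_max_coeff m A c d U = Max (
        {\<bar>A i $ j $ j\<bar> | i j. i \<in> {1..m}}
      \<union> {\<bar>A i $ j $ k + A i $ k $ j\<bar> | i j k. i \<in> {1..m} \<and> j \<noteq> k}
      \<union> {\<bar>c i $ j\<bar> | i j. i \<in> {1..m}}
      \<union> {\<bar>d i\<bar> | i. i \<in> {1..m}}
      \<union> {\<bar>1 / U i\<bar> | i. i \<in> {2..m}}
      \<union> {1, real m + 1})"

end

theory Submission
  imports Defs
begin

lemma quad_scale:
  "quad A c d (t *\<^sub>R x) = t\<^sup>2 * (x \<bullet> (A *v x)) + t * (c \<bullet> x) + d"
  unfolding quad_def by (simp add: matrix_vector_mult_scaleR power2_eq_square)

lemma max_coeff_ge1:
  fixes A :: "nat \<Rightarrow> real^'n^'n"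
  shows "S2_max_coeff m A c d U \<ge> 1"
proof -
  have f1: "finite {\<bar>A i $ j $ j\<bar> | i j. i \<in> {1..m}}"
  proof -
    have "{\<bar>A i $ j $ j\<bar> | i j. i \<in> {1..m}} = (\<lambda>(i,j). \<bar>A i $ j $ j\<bar>) ` ({1..m} \<times> UNIV)"
      by auto
    thus ?thesis by simp
  qed
  have f2: "finite {\<bar>A i $ j $ k + A i $ k $ j\<bar> | i j k. i \<in> {1..m} \<and> j \<noteq> k}"
  proof -
    have "{\<bar>A i $ j $ k + A i $ k $ j\<bar> | i j k. i \<in> {1..m} \<and> j \<noteq> k}
        \<subseteq> (\<lambda>(i,j,k). \<bar>A i $ j $ k + A i $ k $ j\<bar>) ` ({1..m} \<times> UNIV \<times> UNIV)"
    proof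
      fix v assume "v \<in> {\<bar>A i $ j $ k + A i $ k $ j\<bar> | i j k. i \<in> {1..m} \<and> j \<noteq> k}"
      then obtain i j k where "v = \<bar>A i $ j $ k + A i $ k $ j\<bar>" "i \<in> {1..m}" by blast
      thus "v \<in> (\<lambda>(i,j,k). \<bar>A i $ j $ k + A i $ k $ j\<bar>) ` ({1..m} \<times> UNIV \<times> UNIV)"
        by (intro image_eqI[of _ _ "(i,j,k)"]) auto
    qed
    thus ?thesis by (rule finite_subset) simp
  qed
  have f3: "finite {\<bar>c i $ j\<bar> | i j. i \<in> {1..m}}"
  proof -
    have "{\<bar>c i $ j\<bar> | i j. i \<in> {1..m}} = (\<lambda>(i,j). \<bar>c i $ j\<bar>) ` ({1..m} \<times> UNIV)"
      by auto
    thus ?thesis by simp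
  qed
  have f4: "finite {\<bar>d i\<bar> | i. i \<in> {1..m}}" by simp
  have f5: "finite {\<bar>1 / U i\<bar> | i. i \<in> {2..m}}" by simp
  show ?thesis unfolding S2_max_coeff_def
    by (rule Max_ge) (use f1 f2 f3 f4 f5 in auto)
qed

theorem lemma2:
  fixes m :: nat
    and A :: "nat \<Rightarrow> real^'n^'n"
    and c :: "nat \<Rightarrow> real^'n"
    and d :: "nat \<Rightarrow> real"
    and U :: "nat \<Rightarrow> real"
    and eps :: real
  assumes "m \<ge> 2"
    and "CARD('n) \<ge> 2"
    and "\<forall>i\<in>{1..m}. transpose (A i) = A i"
    and "\<forall>x. quad (A 1) (c 1) (d 1) x = (norm x)\<^sup>2 - 1"
    and "\<forall>i\<in>{2..m}. U i > 0"
    and "\<forall>i\<in>{2..m}. \<forall>x. (norm x)\<^sup>2 \<le> 2 \<longrightarrow> \<bar>quad (A i) (c i) (d i) x\<bar> \<le> U i"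
    and "0 \<le> eps" and "eps < 1/2"
  shows "(S1_eps_feasible m A c d eps \<longrightarrow> S2_eps_feasible m A c d U (real m * eps))
       \<and> (S2_eps_feasible m A c d U eps \<longrightarrow>
            S1_eps_feasible m A c d ((2 * real CARD('n) + 1) * S2_max_coeff m A c d U * eps))"
proof (intro conjI impI)
  assume "S1_eps_feasible m A c d eps"
  then obtain x where hx: "\<forall>i\<in>{1..m}. quad (A i) (c i) (d i) x \<le> eps"
    unfolding S1_eps_feasible_def by blast
  define f where "f i = quad (A i) (c i) (d i) x" for i
  define s where "s i = sqrt (max 0 (- f i))" for i
  define w where "w i = sqrt (U i - (s i)\<^sup>2)" for i
  have s2: "(s i)\<^sup>2 = max 0 (- f i)" for i unfolding s_def by simp
  have f1: "f 1 = (norm x)\<^sup>2 - 1" using assms(4) f_def by simp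
  have "f 1 \<le> eps" using hx assms(1) f_def by auto
  hence nx: "(norm x)\<^sup>2 \<le> 2" using f1 assms(8) by linarith
  have sU: "(s i)\<^sup>2 \<le> U i" if "i \<in> {2..m}" for i
  proof -
    have "\<bar>f i\<bar> \<le> U i" using assms(6) that nx unfolding f_def by blast
    thus ?thesis using s2[of i] by linarith
  qed
  have w2: "(w i)\<^sup>2 = U i - (s i)\<^sup>2" if "i \<in> {2..m}" for i
    using sU[OF that] unfolding w_def by simp
  have eqA: "S2_eqA (A i) (c i) (d i) 1 x (s i) = max (f i) 0" for i
    unfolding S2_eqA_def f_def quad_def s2 by (simp add: f_def quad_def)
  have eqB: "S2_eqB (U i) 1 (s i) (w i) = 0" if "i \<in> {2..m}" for i
  proof -
    have "U i > 0" using assms(5) that by blast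
    thus ?thesis using w2[OF that] unfolding S2_eqB_def by simp
  qed
  have "(\<Sum>i=2..m. ((s i)\<^sup>2 + (w i)\<^sup>2) / U i) = (\<Sum>i=2..m. 1)"
    by (rule sum.cong) (use w2 assms(5) in \<open>auto simp: less_le\<close>)
  also have "\<dots> = real m - 1" using assms(1) by simp
  finally have sumeq: "(\<Sum>i=2..m. ((s i)\<^sup>2 + (w i)\<^sup>2) / U i) = real m - 1" .
  have eqC: "S2_eqC m U 1 x s w = max (f 1) 0"
    unfolding S2_eqC_def sumeq using s2[of 1] f1 by auto
  have meps: "eps \<le> real m * eps" using assms(1,7)
    by (metis mult_le_cancel_right1 of_nat_1 of_nat_le_iff le_trans one_le_numeral not_le)
  show "S2_eps_feasible m A c d U (real m * eps)"
    unfolding S2_eps_feasible_def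
  proof (intro exI conjI ballI)
    fix i assume i: "i \<in> {1..m}"
    show "\<bar>S2_eqA (A i) (c i) (d i) 1 x (s i)\<bar> \<le> real m * eps"
    proof -
      have "f i \<le> eps" using hx i unfolding f_def by blast
      thus ?thesis using eqA[of i] assms(7) meps by auto
    qed
  next
    fix i assume i: "i \<in> {2..m}"
    show "\<bar>S2_eqB (U i) 1 (s i) (w i)\<bar> \<le> real m * eps"
      using eqB[OF i] assms(7) meps by auto
  next
    show "\<bar>S2_eqC m U 1 x s w\<bar> \<le> real m * eps"
    proof -
      have "f 1 \<le> eps" using hx assms(1) f_def by auto
      thus ?thesis using eqC assms(7) meps by auto
    qed
  qed
next
  assume "S2_eps_feasible m A c d U eps"
  then obtain v0 x s w where
    hA: "\<forall>i\<in>{1..m}. \<bar>S2_eqA (A i) (c i) (d i) v0 x (s i)\<bar> \<le> eps" and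
    hB: "\<forall>i\<in>{2..m}. \<bar>S2_eqB (U i) v0 (s i) (w i)\<bar> \<le> eps" and
    hC: "\<bar>S2_eqC m U v0 x s w\<bar> \<le> eps"
    unfolding S2_eps_feasible_def by blast
  have d1: "d 1 = -1" using assms(4)[rule_format, of 0] unfolding quad_def by simp
  have c1: "c 1 \<bullet> y = 0" for y
  proof -
    have "quad (A 1) (c 1) (d 1) y = quad (A 1) (c 1) (d 1) ((-1) *\<^sub>R y)"
      using assms(4) by simp
    moreover have "quad (A 1) (c 1) (d 1) ((-1) *\<^sub>R y) = y \<bullet> (A 1 *v y) - c 1 \<bullet> y + d 1"
      using quad_scale[of "A 1" "c 1" "d 1" "-1" y] by (simp only:) simp
    moreover have "quad (A 1) (c 1) (d 1) y = y \<bullet> (A 1 *v y) + c 1 \<bullet> y + d 1"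
      by (simp add: quad_def)
    ultimately show ?thesis by linarith
  qed
  have A1: "y \<bullet> (A 1 *v y) = (norm y)\<^sup>2" for y
    using assms(4)[rule_format, of y] d1 c1[of y] unfolding quad_def by simp
  have e1: "\<bar>(norm x)\<^sup>2 - v0\<^sup>2 + (s 1)\<^sup>2\<bar> \<le> eps"
  proof -
    have "\<bar>S2_eqA (A 1) (c 1) (d 1) v0 x (s 1)\<bar> \<le> eps" using hA assms(1) by auto
    thus ?thesis unfolding S2_eqA_def A1 c1 d1 by simp
  qed
  define q where "q i = ((s i)\<^sup>2 + (w i)\<^sup>2) / U i" for i
  have "\<bar>(\<Sum>i=2..m. q i - v0\<^sup>2)\<bar> \<le> (\<Sum>i=2..m. eps)"
    by (rule order_trans[OF sum_abs sum_mono]) (use hB in \<open>auto simp: S2_eqB_def q_def\<close>)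
  also have "\<dots> = (real m - 1) * eps" using assms(1) by simp
  finally have sb: "\<bar>(\<Sum>i=2..m. q i) - (real m - 1) * v0\<^sup>2\<bar> \<le> (real m - 1) * eps"
    using assms(1) by (simp add: sum_subtractf)
  have hC': "\<bar>(norm x)\<^sup>2 + (s 1)\<^sup>2 + (\<Sum>i=2..m. q i) + v0\<^sup>2 - (real m + 1)\<bar> \<le> eps"
    using hC unfolding S2_eqC_def q_def by simp
  have "\<bar>(real m + 1) * (v0\<^sup>2 - 1)\<bar> \<le> (real m + 1) * eps"
    using e1 sb hC' by (simp add: algebra_simps abs_le_iff) linarith
  hence "(real m + 1) * \<bar>v0\<^sup>2 - 1\<bar> \<le> (real m + 1) * eps" by (simp add: abs_mult)
  hence "\<bar>v0\<^sup>2 - 1\<bar> \<le> eps" by simp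
  hence v0h: "v0\<^sup>2 \<ge> 1/2" using assms(8) by linarith
  define y where "y = (1 / v0) *\<^sub>R x"
  have M1: "S2_max_coeff m A c d U \<ge> 1" by (rule max_coeff_ge1)
  have card: "real CARD('n) \<ge> 2" using assms(2) by simp
  have T: "2 * eps \<le> (2 * real CARD('n) + 1) * S2_max_coeff m A c d U * eps"
  proof -
    have "2 \<le> (2 * real CARD('n) + 1) * S2_max_coeff m A c d U"
    proof -
      have "1 * 1 \<le> (2 * real CARD('n) + 1) * S2_max_coeff m A c d U"
        by (rule mult_mono) (use M1 card in auto)
      show ?thesis
        using mult_mono[of 5 "2 * real CARD('n) + 1" 1 "S2_max_coeff m A c d U"] M1 card by linarith
    qed
    thus ?thesis using assms(7) by (metis mult_right_mono)
  qed
  show "S1_eps_feasible m A c d ((2 * real CARD('n) + 1) * S2_max_coeff m A c d U * eps)"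
    unfolding S1_eps_feasible_def
  proof (intro exI ballI)
    fix i assume i: "i \<in> {1..m}"
    have v0nz: "v0 \<noteq> 0" using v0h by auto
    have "v0\<^sup>2 * quad (A i) (c i) (d i) y = S2_eqA (A i) (c i) (d i) v0 x (s i) - (s i)\<^sup>2"
      unfolding y_def quad_scale S2_eqA_def using v0nz
      by (simp add: power2_eq_square field_simps)
    also have "\<dots> \<le> eps" using hA i by (smt (verit) zero_le_power2)
    also have "\<dots> \<le> v0\<^sup>2 * (2 * eps)"
      using mult_right_mono[OF v0h, of "2*eps"] assms(7) by simp
    finally have fin: "v0\<^sup>2 * quad (A i) (c i) (d i) y \<le> v0\<^sup>2 * (2 * eps)" .
    have "quad (A i) (c i) (d i) y \<le> 2 * eps"
    proof (rule ccontr)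
      assume "\<not> ?thesis"
      hence "v0\<^sup>2 * (2 * eps) < v0\<^sup>2 * quad (A i) (c i) (d i) y"
        using v0h by (intro mult_strict_left_mono) auto
      thus False using \<open>v0\<^sup>2 * quad (A i) (c i) (d i) y \<le> v0\<^sup>2 * (2 * eps)\<close> by linarith
    qed
    thus "quad (A i) (c i) (d i) y \<le> (2 * real CARD('n) + 1) * S2_max_coeff m A c d U * eps"
      using T by linarith
  qed
qed

end
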